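(* Let $\mu$ be a finite Borel measure on $\mathbb R^n$ that is absolutely continuous with respect to Lebesgue measure and invariant under all orthogonal transformations of $\mathbb R^n$. Let $B$ be a closed Euclidean ball centered at the origin and let $T\subseteq\mathbb R^n$ be a measurable set that is star-shaped with respect to $0$ (i.e. $x\in T$ implies $sx\in T$ for all $s\in[0,1]$). Then \[ \mu(B\cap T)\,\mu(\mathbb R^n)\ge\mu(B)\,\mu(T). \] *)

theory Defs
  imports "HOL-Analysis.Analysis"
begin

end

theory Submission
  imports Defs
begin

definition oinv :: "(real^'n) measure \<Rightarrow> bool" where
  "oinv M \<longleftrightarrow> (\<forall>f A. orthogonal_transformation f \<longrightarrow> A \<in> sets borel \<longrightarrow> emeasure M (f -` A) = emeasure M A)"

lemma ot_dist: "orthogonal_transformation f \<Longrightarrow> dist (f u) (f x) = dist u x"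
  by (metis dist_norm orthogonal_transformation_def linear_diff orthogonal_transformation_norm)

lemma kmeas: "F \<in> sets borel \<Longrightarrow> (\<lambda>(u::real^'n,w::real^'n). indicator F w * indicator (ball u e) w :: ennreal) \<in> borel_measurable (borel \<Otimes>\<^sub>M borel)"
proof -
  assume F: "F \<in> sets borel"
  have "(\<lambda>(u::real^'n,w::real^'n). indicator F w * indicator (ball u e) w :: ennreal) = (\<lambda>p. indicator F (snd p) * indicator {p. dist (fst p) (snd p) < e} p)"
    by (auto simp: fun_eq_iff split: split_indicator)
  moreover have "{p::(real^'n)\<times>(real^'n). dist (fst p) (snd p) < e} \<in> sets (borel \<Otimes>\<^sub>M borel)"
    unfolding borel_prod by (intro borel_open open_Collect_less continuous_intros)
  ultimately show ?thesis using F by (simp) measurable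
qed

lemma cap_const:
  assumes "oinv a" "norm u = 1" "norm v = 1"
  shows "emeasure a (ball u e) = emeasure a (ball v e)"
proof -
  obtain f where f: "orthogonal_transformation f" "f u = v"
    using orthogonal_transformation_exists[of u v] assms by auto
  have "f -` ball v e = ball u e"
    using f ot_dist[OF f(1), of u] by (auto simp: mem_ball)
  then show ?thesis using assms(1) f unfolding oinv_def by (metis borel_open open_ball)
qed

lemma kernel:
  fixes a b :: "(real^'n) measure"
  assumes sa: "sets a = sets borel" and sb: "sets b = sets borel"
    and fa: "finite_measure a" and fb: "finite_measure b"
    and ia: "oinv a" and cb: "emeasure b (UNIV - sphere 0 1) = 0"
    and u0: "norm u0 = 1" and F: "F \<in> sets borel"
  shows "(\<integral>\<^sup>+u. \<integral>\<^sup>+w. indicator F w * indicator (ball u e) w \<partial>b \<partial>a) = emeasure a (ball u0 e) * emeasure b F"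
proof -
  interpret A: finite_measure a by fact
  interpret B: finite_measure b by fact
  interpret pair_sigma_finite a b ..
  have sp: "space a = UNIV" "space b = UNIV" using sets_eq_imp_space_eq[OF sa] sets_eq_imp_space_eq[OF sb] by auto
  have m: "case_prod (\<lambda>u w. indicator F w * indicator (ball u e) w :: ennreal) \<in> borel_measurable (a \<Otimes>\<^sub>M b)"
    using kmeas[OF F, of e] by (simp add: measurable_cong_sets[OF sets_pair_measure_cong[OF sa sb] refl])
  have "(\<integral>\<^sup>+u. \<integral>\<^sup>+w. indicator F w * indicator (ball u e) w \<partial>b \<partial>a)
      = (\<integral>\<^sup>+w. \<integral>\<^sup>+u. indicator F w * indicator (ball u e) w \<partial>a \<partial>b)"
    using Fubini'[OF m] by simp
  also have "\<dots> = (\<integral>\<^sup>+w. indicator F w * emeasure a (ball w e) \<partial>b)"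
  proof (intro nn_integral_cong)
    fix w
    have "(\<integral>\<^sup>+u. indicator F w * indicator (ball u e) w \<partial>a) = (\<integral>\<^sup>+u. indicator F w * indicator (ball w e) u \<partial>a)"
      by (intro nn_integral_cong) (auto split: split_indicator simp: dist_commute)
    also have "\<dots> = indicator F w * emeasure a (ball w e)"
      using sa by (subst nn_integral_cmult_indicator) auto
    finally show "(\<integral>\<^sup>+u. indicator F w * indicator (ball u e) w \<partial>a) = indicator F w * emeasure a (ball w e)" .
  qed
  also have "\<dots> = (\<integral>\<^sup>+w. emeasure a (ball u0 e) * indicator F w \<partial>b)"
  proof (intro nn_integral_cong_AE)
    have "AE w in b. w \<in> sphere 0 1"
      by (rule AE_I[where N="UNIV - sphere 0 1"]) (use cb sb in \<open>auto simp: sp\<close>)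
    then show "AE w in b. indicator F w * emeasure a (ball w e) = emeasure a (ball u0 e) * indicator F w"
      by eventually_elim (use cap_const[OF ia _ u0] in \<open>auto simp: mult.commute\<close>)
  qed
  also have "\<dots> = emeasure a (ball u0 e) * emeasure b F"
    using sb F by (subst nn_integral_cmult_indicator) auto
  finally show ?thesis .
qed

lemma kernel2:
  fixes a b :: "(real^'n) measure"
  assumes sa: "sets a = sets borel" and sb: "sets b = sets borel"
    and ib: "oinv b" and ca: "emeasure a (UNIV - sphere 0 1) = 0"
    and u0: "norm u0 = 1" and G: "G \<in> sets borel"
  shows "(\<integral>\<^sup>+u. \<integral>\<^sup>+w. indicator G u * indicator (ball u e) w \<partial>b \<partial>a) = emeasure b (ball u0 e) * emeasure a G"
proof -
  have sp: "space a = UNIV" "space b = UNIV" using sets_eq_imp_space_eq[OF sa] sets_eq_imp_space_eq[OF sb] by auto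
  have "(\<integral>\<^sup>+u. \<integral>\<^sup>+w. indicator G u * indicator (ball u e) w \<partial>b \<partial>a) = (\<integral>\<^sup>+u. indicator G u * emeasure b (ball u e) \<partial>a)"
    using sb by (intro nn_integral_cong) (subst nn_integral_cmult_indicator, auto)
  also have "\<dots> = (\<integral>\<^sup>+u. emeasure b (ball u0 e) * indicator G u \<partial>a)"
  proof (intro nn_integral_cong_AE)
    have "AE w in a. w \<in> sphere 0 1"
      by (rule AE_I[where N="UNIV - sphere 0 1"]) (use ca sa in \<open>auto simp: sp\<close>)
    then show "AE w in a. indicator G w * emeasure b (ball w e) = emeasure b (ball u0 e) * indicator G w"
      by eventually_elim (use cap_const[OF ib _ u0] in \<open>auto simp: mult.commute\<close>)
  qed
  also have "\<dots> = emeasure b (ball u0 e) * emeasure a G"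
    using sa G by (subst nn_integral_cmult_indicator) auto
  finally show ?thesis .
qed

lemma cap_pos:
  fixes a :: "(real^'n) measure"
  assumes sa: "sets a = sets borel" and fa: "finite_measure a"
    and ca: "emeasure a (UNIV - sphere 0 1) = 0" and ia: "oinv a"
    and u0: "norm u0 = 1" and e: "e > 0" and pos: "measure a UNIV > 0"
  shows "measure a (ball u0 e) > 0"
proof -
  interpret A: finite_measure a by fact
  have cov: "sphere (0::real^'n) 1 \<subseteq> (\<Union>c\<in>sphere 0 1. ball c e)"
  proof
    fix x :: "real^'n" assume x: "x \<in> sphere 0 1"
    have "x \<in> ball x e" using e by simp
    then show "x \<in> (\<Union>c\<in>sphere 0 1. ball c e)" using x by blast
  qed
  then obtain C where C: "C \<subseteq> sphere (0::real^'n) 1" "finite C" "sphere 0 1 \<subseteq> (\<Union>c\<in>C. ball c e)"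
    using compactE_image[OF compact_sphere[of "0::real^'n" 1], where C="sphere (0::real^'n) 1" and f="\<lambda>c. ball c e"] by auto
  have m1: "(\<Union>c\<in>C. ball c e) \<in> sets a" unfolding sa by (intro borel_open open_UN) auto
  have m2: "UNIV - sphere 0 1 \<in> sets a" unfolding sa by (intro borel_open open_Diff) auto
  have m3: "\<And>c. ball c e \<in> sets a" unfolding sa by auto
  have sub: "UNIV \<subseteq> (\<Union>c\<in>C. ball c e) \<union> (UNIV - sphere 0 1)" using C(3) by blast
  have "measure a UNIV \<le> measure a ((\<Union>c\<in>C. ball c e) \<union> (UNIV - sphere 0 1))"
    by (rule A.finite_measure_mono[OF sub]) (use m1 m2 in blast)
  also have "\<dots> \<le> measure a (\<Union>c\<in>C. ball c e) + measure a (UNIV - sphere 0 1)"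
    by (rule measure_Un_le[OF m1 m2])
  also have "measure a (UNIV - sphere 0 1) = 0" using ca by (simp add: measure_def)
  also have "measure a (\<Union>c\<in>C. ball c e) \<le> (\<Sum>c\<in>C. measure a (ball c e))"
    by (rule measure_UNION_le[OF C(2) m3])
  also have "\<dots> = (\<Sum>c\<in>C. measure a (ball u0 e))"
  proof (rule sum.cong[OF refl])
    fix c assume "c \<in> C"
    then have "norm c = 1" using C(1) by auto
    then show "measure a (ball c e) = measure a (ball u0 e)" using cap_const[OF ia _ u0] by (simp add: measure_def)
  qed
  finally have "0 < real (card C) * measure a (ball u0 e)" using pos by simp
  then show ?thesis by (simp add: zero_less_mult_iff)
qed
lemma eps_ineq:
  fixes a b :: "(real^'n) measure"
  assumes sa: "sets a = sets borel" and sb: "sets b = sets borel"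
    and fa: "finite_measure a" and fb: "finite_measure b"
    and ia: "oinv a" and ib: "oinv b"
    and ca: "emeasure a (UNIV - sphere 0 1) = 0" and cb: "emeasure b (UNIV - sphere 0 1) = 0"
    and F: "F \<in> sets borel" and e: "e > 0"
  shows "measure b F * measure a UNIV \<le> measure b UNIV * measure a (\<Union>w\<in>F. ball w e)"
proof -
  interpret A: finite_measure a by fact
  interpret B: finite_measure b by fact
  obtain u0 :: "real^'n" where u0: "norm u0 = 1" using vector_choose_size[of 1] by auto
  define Fe where "Fe = (\<Union>w\<in>F. ball w e)"
  have Fe: "Fe \<in> sets borel" unfolding Fe_def by (intro borel_open open_UN) auto
  have "emeasure a (ball u0 e) * emeasure b F = (\<integral>\<^sup>+u. \<integral>\<^sup>+w. indicator F w * indicator (ball u e) w \<partial>b \<partial>a)"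
    by (rule kernel[OF sa sb fa fb ia cb u0 F, symmetric])
  also have "\<dots> \<le> (\<integral>\<^sup>+u. \<integral>\<^sup>+w. indicator Fe u * indicator (ball u e) w \<partial>b \<partial>a)"
  proof (intro nn_integral_mono)
    fix u w
    show "indicator F w * indicator (ball u e) w \<le> (indicator Fe u * indicator (ball u e) w :: ennreal)"
    proof (cases "w \<in> F \<and> w \<in> ball u e")
      case True
      then have "u \<in> Fe" unfolding Fe_def by (auto simp: dist_commute mem_ball)
      then show ?thesis using True by simp
    next
      case False
      then have h: "indicator F w * indicator (ball u e) w = (0::ennreal)" by (auto simp: indicator_def)
      show ?thesis unfolding h by simp
    qed
  qed
  also have "\<dots> = emeasure b (ball u0 e) * emeasure a Fe"
    by (rule kernel2[OF sa sb ib ca u0 Fe])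
  finally have i1: "emeasure a (ball u0 e) * emeasure b F \<le> emeasure b (ball u0 e) * emeasure a Fe" .
  have "emeasure a (ball u0 e) * emeasure b UNIV = (\<integral>\<^sup>+u. \<integral>\<^sup>+w. indicator UNIV w * indicator (ball u e) w \<partial>b \<partial>a)"
    by (rule kernel[OF sa sb fa fb ia cb u0, of UNIV, symmetric]) simp
  also have "\<dots> = (\<integral>\<^sup>+u. \<integral>\<^sup>+w. indicator UNIV u * indicator (ball u e) w \<partial>b \<partial>a)"
    by (simp only: indicator_UNIV)
  also have "\<dots> = emeasure b (ball u0 e) * emeasure a UNIV"
    by (rule kernel2[OF sa sb ib ca u0, of UNIV]) simp
  finally have i2: "emeasure a (ball u0 e) * emeasure b UNIV = emeasure b (ball u0 e) * emeasure a UNIV" .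
  define xa where "xa = measure a (ball u0 e)"
  define xb where "xb = measure b (ball u0 e)"
  have r1: "xa * measure b F \<le> xb * measure a Fe"
  proof -
    have "ennreal (xa * measure b F) \<le> ennreal (xb * measure a Fe)"
      using i1 unfolding xa_def xb_def A.emeasure_eq_measure B.emeasure_eq_measure
      by (simp only: ennreal_mult[symmetric] measure_nonneg)
    then show ?thesis by (rule ennreal_le_iff[THEN iffD1, rotated]) (simp add: xb_def)
  qed
  have r2: "xa * measure b UNIV = xb * measure a UNIV"
  proof -
    have "ennreal (xa * measure b UNIV) = ennreal (xb * measure a UNIV)"
      using i2 unfolding xa_def xb_def A.emeasure_eq_measure B.emeasure_eq_measure
      by (simp only: ennreal_mult[symmetric] measure_nonneg)
    then show ?thesis by (simp add: xa_def xb_def)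
  qed
  show ?thesis
  proof (cases "measure a UNIV > 0")
    case False
    then have "measure a UNIV = 0" using measure_nonneg[of a UNIV] by linarith
    then show ?thesis by (simp add: mult_nonneg_nonneg)
  next
    case True
    have xa: "xa > 0" unfolding xa_def using cap_pos[OF sa fa ca ia u0 e True] .
    have "xa * (measure b F * measure a UNIV) \<le> xb * measure a Fe * measure a UNIV"
      using mult_right_mono[OF r1 measure_nonneg[of a UNIV]] by (simp only: ac_simps)
    also have "\<dots> = (xb * measure a UNIV) * measure a Fe" by (simp only: ac_simps)
    also have "\<dots> = xa * (measure b UNIV * measure a Fe)" unfolding r2[symmetric] by (simp only: ac_simps)
    finally have "xa * (measure b F * measure a UNIV) \<le> xa * (measure b UNIV * measure a Fe)" .
    then have "measure b F * measure a UNIV \<le> measure b UNIV * measure a Fe"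
      using xa by (rule mult_left_le_imp_le)
    then show ?thesis unfolding Fe_def .
  qed
qed
lemma closed_ineq:
  fixes a b :: "(real^'n) measure"
  assumes sa: "sets a = sets borel" and sb: "sets b = sets borel"
    and fa: "finite_measure a" and fb: "finite_measure b"
    and ia: "oinv a" and ib: "oinv b"
    and ca: "emeasure a (UNIV - sphere 0 1) = 0" and cb: "emeasure b (UNIV - sphere 0 1) = 0"
    and F: "closed F"
  shows "measure b F * measure a UNIV \<le> measure b UNIV * measure a F"
proof -
  interpret A: finite_measure a by fact
  define Fk where "Fk k = (\<Union>w\<in>F. ball w (1 / Suc k))" for k :: nat
  have Fb: "F \<in> sets borel" using F by (rule borel_closed)
  have ineq: "measure b F * measure a UNIV \<le> measure b UNIV * measure a (Fk k)" for k
    unfolding Fk_def by (rule eps_ineq[OF sa sb fa fb ia ib ca cb Fb]) simp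
  have rng: "range Fk \<subseteq> sets a" unfolding Fk_def sa by (auto intro!: borel_open open_UN)
  have dec: "decseq Fk"
  proof (rule decseq_SucI)
    fix k
    have "1 / real (Suc (Suc k)) \<le> 1 / real (Suc k)" by (simp add: frac_le)
    then show "Fk (Suc k) \<subseteq> Fk k" unfolding Fk_def by (auto simp: mem_ball)
  qed
  have int: "(\<Inter>k. Fk k) = F"
  proof
    show "F \<subseteq> (\<Inter>k. Fk k)"
    proof
      fix u assume "u \<in> F"
      moreover have "u \<in> ball u (1 / Suc k)" for k by simp
      ultimately show "u \<in> (\<Inter>k. Fk k)" unfolding Fk_def by blast
    qed
    show "(\<Inter>k. Fk k) \<subseteq> F"
    proof
      fix u assume u: "u \<in> (\<Inter>k. Fk k)"
      have "\<exists>w\<in>F. dist w u < e" if e: "e > 0" for e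
      proof -
        obtain k where k: "inverse (real (Suc k)) < e" using reals_Archimedean[OF e] by blast
        from u have "u \<in> Fk k" by blast
        then obtain w where "w \<in> F" "dist w u < 1 / Suc k" unfolding Fk_def by (auto simp: mem_ball)
        moreover have "1 / real (Suc k) < e" using k by (simp add: inverse_eq_divide)
        ultimately show ?thesis by (meson less_trans)
      qed
      then have "u \<in> closure F" by (simp add: closure_approachable)
      then show "u \<in> F" using F by (simp add: closure_closed)
    qed
  qed
  have "(\<lambda>k. measure a (Fk k)) \<longlonglongrightarrow> measure a F"
    using A.finite_Lim_measure_decseq[OF rng dec] unfolding int .
  then have "(\<lambda>k. measure b UNIV * measure a (Fk k)) \<longlonglongrightarrow> measure b UNIV * measure a F"
    by (rule tendsto_mult_left)
  then show ?thesis by (rule LIMSEQ_le_const) (use ineq in blast)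
qed

lemma sphere_unique:
  fixes a b :: "(real^'n) measure"
  assumes sa: "sets a = sets borel" and sb: "sets b = sets borel"
    and fa: "finite_measure a" and fb: "finite_measure b"
    and ia: "oinv a" and ib: "oinv b"
    and ca: "emeasure a (UNIV - sphere 0 1) = 0" and cb: "emeasure b (UNIV - sphere 0 1) = 0"
    and U: "U \<in> sets borel"
  shows "measure a U * measure b UNIV = measure b U * measure a UNIV"
proof -
  interpret A: finite_measure a by fact
  interpret B: finite_measure b by fact
  define A' where "A' = density a (\<lambda>_. ennreal (measure b UNIV))"
  define B' where "B' = density b (\<lambda>_. ennreal (measure a UNIV))"
  have eA: "emeasure A' X = ennreal (measure a X * measure b UNIV)" if "X \<in> sets borel" for X
    unfolding A'_def using that sa
    by (simp add: emeasure_density_const A.emeasure_eq_measure ennreal_mult[symmetric] mult.commute)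
  have eB: "emeasure B' X = ennreal (measure b X * measure a UNIV)" if "X \<in> sets borel" for X
    unfolding B'_def using that sb
    by (simp add: emeasure_density_const B.emeasure_eq_measure ennreal_mult[symmetric] mult.commute)
  have sig: "sets borel = sigma_sets UNIV (Collect closed)"
    by (subst borel_eq_closed) (simp add: sets_measure_of)
  have "A' = B'"
  proof (rule measure_eqI_generator_eq[where E="Collect closed" and \<Omega>=UNIV and A="\<lambda>_. UNIV"])
    show "Int_stable (Collect closed)" by (auto simp: Int_stable_def)
    show "Collect closed \<subseteq> Pow UNIV" by simp
    fix X :: "(real^'n) set" assume "X \<in> Collect closed"
    then have X: "closed X" by simp
    have "measure a X * measure b UNIV = measure b X * measure a UNIV"
      using closed_ineq[OF sa sb fa fb ia ib ca cb X] closed_ineq[OF sb sa fb fa ib ia cb ca X]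
      by (simp add: algebra_simps)
    then show "emeasure A' X = emeasure B' X" using X by (simp add: eA eB borel_closed)
  next
    show "sets A' = sigma_sets UNIV (Collect closed)" unfolding A'_def using sa sig by simp
    show "sets B' = sigma_sets UNIV (Collect closed)" unfolding B'_def using sb sig by simp
    show "range (\<lambda>_. UNIV) \<subseteq> Collect closed" by simp
    show "(\<Union>i. UNIV) = (UNIV :: (real^'n) set)" by simp
    show "emeasure A' UNIV \<noteq> \<infinity>" for i :: nat using eA[of UNIV] by simp
  qed
  then have "ennreal (measure a U * measure b UNIV) = ennreal (measure b U * measure a UNIV)"
    using eA[OF U] eB[OF U] by simp
  then show ?thesis by (simp add: ennreal_inj)
qed

lemma ot_sgn: "orthogonal_transformation f \<Longrightarrow> sgn (f x) = f (sgn x)"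
  by (simp add: sgn_div_norm orthogonal_transformation_norm orthogonal_transformation_scaleR)

lemma ot_meas: "orthogonal_transformation (f::real^'n \<Rightarrow> real^'n) \<Longrightarrow> f \<in> borel_measurable borel"
  by (intro borel_measurable_continuous_onI linear_continuous_on) (simp add: orthogonal_transformation_def linear_conv_bounded_linear)

lemma sgn_pre_sphere: "sgn -` (UNIV - sphere 0 1) = {0::real^'n}"
  by (auto simp: norm_sgn split: if_splits)

lemma dirU:
  fixes \<alpha> \<beta> :: "(real^'n) measure"
  assumes sa: "sets \<alpha> = sets borel" and sb: "sets \<beta> = sets borel"
    and fa: "finite_measure \<alpha>" and fb: "finite_measure \<beta>"
    and ia: "oinv \<alpha>" and ib: "oinv \<beta>"
    and za: "emeasure \<alpha> {0} = 0" and zb: "emeasure \<beta> {0} = 0"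
    and V: "V \<in> sets borel"
  shows "measure \<alpha> (sgn -` V) * measure \<beta> UNIV = measure \<beta> (sgn -` V) * measure \<alpha> UNIV"
proof -
  have gen: "sets (distr M borel sgn) = sets borel \<and> finite_measure (distr M borel sgn) \<and> oinv (distr M borel sgn)
      \<and> emeasure (distr M borel sgn) (UNIV - sphere 0 1) = 0
      \<and> (\<forall>X \<in> sets borel. measure (distr M borel sgn) X = measure M (sgn -` X))"
    if sM: "sets M = sets borel" and fM: "finite_measure M" and iM: "oinv M" and zM: "emeasure M {0} = 0"
    for M :: "(real^'n) measure"
  proof (intro conjI)
    have spM: "space M = UNIV" using sets_eq_imp_space_eq[OF sM] by simp
    have ms: "sgn \<in> measurable M borel" unfolding measurable_cong_sets[OF sM refl] by (rule borel_measurable_sgn)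
    show "sets (distr M borel sgn) = sets borel" by simp
    show "finite_measure (distr M borel sgn)" using fM ms by (rule finite_measure.finite_measure_distr)
    show "emeasure (distr M borel sgn) (UNIV - sphere 0 1) = 0"
      using zM ms by (subst emeasure_distr) (auto simp: spM sgn_pre_sphere)
    show "\<forall>X \<in> sets borel. measure (distr M borel sgn) X = measure M (sgn -` X)"
      using ms by (auto simp: measure_distr spM)
    show "oinv (distr M borel sgn)"
      unfolding oinv_def
    proof (intro allI impI)
      fix f :: "real^'n \<Rightarrow> real^'n" and A :: "(real^'n) set"
      assume f: "orthogonal_transformation f" and A: "A \<in> sets borel"
      have fA: "f -` A \<in> sets borel" using measurable_sets[OF ot_meas[OF f] A] by simp
      have sA: "sgn -` A \<in> sets borel" using measurable_sets[OF borel_measurable_sgn A] by simp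
      have "sgn -` (f -` A) = f -` (sgn -` A)" using ot_sgn[OF f] by auto
      then have "emeasure M (sgn -` (f -` A)) = emeasure M (sgn -` A)"
        using iM f sA unfolding oinv_def by simp
      then show "emeasure (distr M borel sgn) (f -` A) = emeasure (distr M borel sgn) A"
        using ms fA A by (simp add: emeasure_distr spM)
    qed
  qed
  note GA = gen[OF sa fa ia za] and GB = gen[OF sb fb ib zb]
  have "measure (distr \<alpha> borel sgn) V * measure (distr \<beta> borel sgn) UNIV
      = measure (distr \<beta> borel sgn) V * measure (distr \<alpha> borel sgn) UNIV"
    using GA GB V by (intro sphere_unique) auto
  then show ?thesis using GA GB V by simp
qed

lemma restr:
  fixes M :: "(real^'n) measure"
  assumes sM: "sets M = sets borel" and fM: "finite_measure M" and iM: "oinv M"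
    and zM: "emeasure M {0} = 0" and S: "S \<in> sets (borel :: real measure)"
  shows "sets (density M (indicator (norm -` S))) = sets borel \<and> finite_measure (density M (indicator (norm -` S)))
    \<and> oinv (density M (indicator (norm -` S))) \<and> emeasure (density M (indicator (norm -` S))) {0} = 0
    \<and> (\<forall>X\<in>sets borel. emeasure (density M (indicator (norm -` S))) X = emeasure M (norm -` S \<inter> X))"
proof -
  have R: "norm -` S \<in> sets M" using measurable_sets[OF borel_measurable_norm S] sM by simp
  have e: "emeasure (density M (indicator (norm -` S))) X = emeasure M (norm -` S \<inter> X)" if "X \<in> sets borel" for X
    using emeasure_restricted[OF R, of X] that sM by simp
  show ?thesis
  proof (intro conjI ballI)
    show "sets (density M (indicator (norm -` S))) = sets borel" using sM by simp
    show "finite_measure (density M (indicator (norm -` S)))"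
      using finite_measure.finite_measure_restricted[OF fM R] .
    show "emeasure (density M (indicator (norm -` S))) {0} = 0"
    proof -
      have "emeasure M (norm -` S \<inter> {0}) \<le> emeasure M {0}"
        using sM by (intro emeasure_mono) auto
      then show ?thesis using e[of "{0}"] zM by simp
    qed
    show "emeasure (density M (indicator (norm -` S))) X = emeasure M (norm -` S \<inter> X)" if "X \<in> sets borel" for X
      using e that by simp
    show "oinv (density M (indicator (norm -` S)))"
      unfolding oinv_def
    proof (intro allI impI)
      fix f :: "real^'n \<Rightarrow> real^'n" and A :: "(real^'n) set"
      assume f: "orthogonal_transformation f" and A: "A \<in> sets borel"
      have fA: "f -` A \<in> sets borel" using measurable_sets[OF ot_meas[OF f] A] by simp
      have RA: "norm -` S \<inter> A \<in> sets borel" using R A sM by simp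
      have eq: "norm -` S \<inter> f -` A = f -` (norm -` S \<inter> A)" using orthogonal_transformation_norm[OF f] by auto
      have "emeasure M (f -` (norm -` S \<inter> A)) = emeasure M (norm -` S \<inter> A)"
        using iM f RA unfolding oinv_def by blast
      then show "emeasure (density M (indicator (norm -` S))) (f -` A) = emeasure (density M (indicator (norm -` S))) A"
        using e[OF fA] e[OF A] eq by simp
    qed
  qed
qed

lemma norm_scale_sgn: "norm x *\<^sub>R sgn x = (x::'a::real_normed_vector)"
  by (cases "x = 0") (simp_all add: sgn_div_norm)

theorem mainTheorem10:
  fixes M :: "(real ^ 'n) measure" and r :: real and T :: "(real ^ 'n) set"
  assumes borel_M: "sets M = sets borel"
    and fin: "finite_measure M"
    and ac: "absolutely_continuous lborel M"
    and inv: "\<And>f A. orthogonal_transformation f \<Longrightarrow> A \<in> sets borel \<Longrightarrow>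
                 emeasure M (f -` A) = emeasure M A"
    and T_meas: "T \<in> sets borel"
    and T_star: "\<And>x s. x \<in> T \<Longrightarrow> 0 \<le> s \<Longrightarrow> s \<le> 1 \<Longrightarrow> s *\<^sub>R x \<in> T"
  shows "measure M (cball 0 r \<inter> T) * measure M UNIV \<ge> measure M (cball 0 r) * measure M T"
proof -
  interpret Mf: finite_measure M by fact
  have spM: "space M = UNIV" using sets_eq_imp_space_eq[OF borel_M] by simp
  have iM: "oinv M" using inv unfolding oinv_def by blast
  have zM: "emeasure M {0} = 0"
  proof -
    have "{0} \<in> null_sets lborel" by (simp add: null_sets_def)
    then have "{0} \<in> null_sets M" using ac unfolding absolutely_continuous_def by blast
    then show ?thesis by (simp add: null_sets_def)
  qed
  define B :: "(real^'n) set" where "B = norm -` {..r}"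
  define C :: "(real^'n) set" where "C = norm -` {r<..}"
  have Bc: "cball 0 r = B" unfolding B_def by (auto simp: mem_cball)
  have BC: "B \<inter> C = {}" "B \<union> C = UNIV" unfolding B_def C_def by auto
  have Bs: "B \<in> sets M" "C \<in> sets M"
    using measurable_sets[OF borel_measurable_norm, of "{..r}"] measurable_sets[OF borel_measurable_norm, of "{r<..}"]
    unfolding B_def C_def borel_M by (simp_all add: space_borel)
  have Ts: "T \<in> sets M" using T_meas borel_M by simp
  note RB = restr[OF borel_M fin iM zM, of "{..r}", folded B_def, simplified]
  note RC = restr[OF borel_M fin iM zM, of "{r<..}", folded C_def, simplified]
  define \<alpha> where "\<alpha> = density M (indicator B)"
  define \<beta> where "\<beta> = density M (indicator C)"
  have sa: "sets \<alpha> = sets borel" and fa: "finite_measure \<alpha>" and ia: "oinv \<alpha>" and za: "emeasure \<alpha> {0} = 0"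
    and ea: "\<And>X. X \<in> sets borel \<Longrightarrow> emeasure \<alpha> X = emeasure M (B \<inter> X)"
    using RB unfolding \<alpha>_def by auto
  have sb: "sets \<beta> = sets borel" and fb: "finite_measure \<beta>" and ib: "oinv \<beta>" and zb: "emeasure \<beta> {0} = 0"
    and eb: "\<And>X. X \<in> sets borel \<Longrightarrow> emeasure \<beta> X = emeasure M (C \<inter> X)"
    using RC unfolding \<beta>_def by auto
  interpret FA: finite_measure \<alpha> by fact
  interpret FB: finite_measure \<beta> by fact
  have spa: "space \<alpha> = UNIV" using sets_eq_imp_space_eq[OF sa] by simp
  have spb: "space \<beta> = UNIV" using sets_eq_imp_space_eq[OF sb] by simp
  have key: "emeasure \<alpha> UNIV * emeasure \<beta> T \<le> emeasure \<beta> UNIV * emeasure \<alpha> T"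
  proof -
    define \<nu> where "\<nu> = distr \<beta> borel sgn"
    define \<rho> where "\<rho> = distr \<alpha> (borel::real measure) norm"
    define c where "c = emeasure \<beta> UNIV"
    define P where "P = distr (density \<alpha> (\<lambda>_. c)) (borel :: (real \<times> (real^'n)) measure) (\<lambda>x. (norm x, sgn x))"
    have msa: "\<And>N. measurable \<alpha> N = measurable borel N" using measurable_cong_sets[OF sa refl] .
    have msb: "\<And>N. measurable \<beta> N = measurable borel N" using measurable_cong_sets[OF sb refl] .
    have sgnb: "sgn \<in> measurable \<beta> borel" unfolding msb by simp
    have norma: "norm \<in> measurable \<alpha> borel" unfolding msa by simp
    have pa: "(\<lambda>x. (norm x, sgn x)) \<in> measurable \<alpha> (borel :: (real \<times> (real^'n)) measure)" unfolding msa by measurable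
    have sn: "sets \<nu> = sets borel" and sr: "sets \<rho> = sets borel" unfolding \<nu>_def \<rho>_def by simp_all
    have fn: "finite_measure \<nu>" unfolding \<nu>_def using fb sgnb by (rule finite_measure.finite_measure_distr)
    have fr: "finite_measure \<rho>" unfolding \<rho>_def using fa norma by (rule finite_measure.finite_measure_distr)
    interpret N: finite_measure \<nu> by fact
    interpret R: finite_measure \<rho> by fact
    have pair: "\<rho> \<Otimes>\<^sub>M \<nu> = P"
    proof (rule pair_measure_eqI)
      show "sigma_finite_measure \<rho>" by (rule R.sigma_finite_measure_axioms)
      show "sigma_finite_measure \<nu>" by (rule N.sigma_finite_measure_axioms)
      show "sets (\<rho> \<Otimes>\<^sub>M \<nu>) = sets P"
        unfolding P_def sets_distr sets_pair_measure_cong[OF sr sn] borel_prod ..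
      fix A V assume A: "A \<in> sets \<rho>" and V: "V \<in> sets \<nu>"
      have Ab: "A \<in> sets borel" using A sr by simp
      have Vb: "V \<in> sets borel" using V sn by simp
      have nA: "norm -` A \<in> sets borel" using measurable_sets[OF borel_measurable_norm Ab] by simp
      have sV: "sgn -` V \<in> sets borel" using measurable_sets[OF borel_measurable_sgn Vb] by simp
      note RA = restr[OF sa fa ia za Ab]
      define \<alpha>' where "\<alpha>' = density \<alpha> (indicator (norm -` A))"
      have s': "sets \<alpha>' = sets borel" and f': "finite_measure \<alpha>'" and i': "oinv \<alpha>'" and z': "emeasure \<alpha>' {0} = 0"
        and e': "\<And>X. X \<in> sets borel \<Longrightarrow> emeasure \<alpha>' X = emeasure \<alpha> (norm -` A \<inter> X)"
        using RA unfolding \<alpha>'_def by auto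
      interpret F': finite_measure \<alpha>' by fact
      have d: "measure \<alpha>' (sgn -` V) * measure \<beta> UNIV = measure \<beta> (sgn -` V) * measure \<alpha>' UNIV"
        by (rule dirU[OF s' sb f' fb i' ib z' zb Vb])
      have d2: "emeasure \<alpha>' (sgn -` V) * emeasure \<beta> UNIV = emeasure \<beta> (sgn -` V) * emeasure \<alpha>' UNIV"
        unfolding F'.emeasure_eq_measure FB.emeasure_eq_measure
        by (simp only: ennreal_mult[symmetric] measure_nonneg d)
      have "emeasure \<rho> A = emeasure \<alpha> (norm -` A)"
        unfolding \<rho>_def using norma Ab by (simp add: emeasure_distr spa)
      moreover have "emeasure \<nu> V = emeasure \<beta> (sgn -` V)"
        unfolding \<nu>_def using sgnb Vb by (simp add: emeasure_distr spb)
      moreover have "emeasure P (A \<times> V) = c * emeasure \<alpha> (norm -` A \<inter> sgn -` V)"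
      proof -
        have "(\<lambda>x. (norm x, sgn x)) -` (A \<times> V) = norm -` A \<inter> sgn -` V" by auto
        moreover have "A \<times> V \<in> sets (borel :: (real \<times> (real^'n)) measure)"
          using Ab Vb by (simp add: borel_prod[symmetric])
        moreover have "norm -` A \<inter> sgn -` V \<in> sets \<alpha>" unfolding sa using nA sV by (rule sets.Int)
        ultimately show ?thesis
          unfolding P_def using pa by (simp add: emeasure_distr spa emeasure_density_const)
      qed
      moreover have "emeasure \<alpha>' (sgn -` V) = emeasure \<alpha> (norm -` A \<inter> sgn -` V)" using e'[OF sV] .
      moreover have "emeasure \<alpha>' UNIV = emeasure \<alpha> (norm -` A)" using e'[of UNIV] by simp
      ultimately show "emeasure \<rho> A * emeasure \<nu> V = emeasure P (A \<times> V)"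
        using d2 unfolding c_def by (simp add: mult.commute)
    qed
    have Ta: "T \<in> sets \<alpha>" using T_meas sa by simp
    have Tb: "T \<in> sets \<beta>" using T_meas sb by simp
    have mI: "(\<lambda>z. indicator T (fst z *\<^sub>R snd z) :: ennreal) \<in> borel_measurable (borel \<Otimes>\<^sub>M (borel :: (real^'n) measure))"
      using T_meas by measurable
    have mIp: "(\<lambda>z. indicator T (fst z *\<^sub>R snd z) :: ennreal) \<in> borel_measurable (\<rho> \<Otimes>\<^sub>M \<nu>)"
      unfolding measurable_cong_sets[OF sets_pair_measure_cong[OF sr sn] refl] by (rule mI)
    have mIc: "case_prod (\<lambda>t u. indicator T (t *\<^sub>R u) :: ennreal) \<in> borel_measurable (borel \<Otimes>\<^sub>M \<nu>)"
      unfolding measurable_cong_sets[OF sets_pair_measure_cong[OF refl sn] refl] using T_meas by measurable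
    have AEa: "AE x in \<alpha>. x \<in> B"
      by (rule AE_I[where N="UNIV - B"]) (use ea[of "UNIV - B"] Bs borel_M sa in \<open>auto\<close>)
    have AEb: "AE y in \<beta>. y \<in> C"
      by (rule AE_I[where N="UNIV - C"]) (use eb[of "UNIV - C"] Bs borel_M sb in \<open>auto\<close>)
    have "emeasure \<alpha> UNIV * emeasure \<beta> T = (\<integral>\<^sup>+x. emeasure \<beta> T \<partial>\<alpha>)"
      by (simp add: spa mult.commute)
    also have "\<dots> \<le> (\<integral>\<^sup>+x. \<integral>\<^sup>+y. indicator T (norm x *\<^sub>R sgn y) \<partial>\<beta> \<partial>\<alpha>)"
    proof (rule nn_integral_mono_AE)
      show "AE x in \<alpha>. emeasure \<beta> T \<le> (\<integral>\<^sup>+y. indicator T (norm x *\<^sub>R sgn y) \<partial>\<beta>)"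
        using AEa
      proof eventually_elim
        case (elim x)
        have "emeasure \<beta> T = (\<integral>\<^sup>+y. indicator T y \<partial>\<beta>)" using Tb by simp
        also have "\<dots> \<le> (\<integral>\<^sup>+y. indicator T (norm x *\<^sub>R sgn y) \<partial>\<beta>)"
        proof (rule nn_integral_mono_AE)
          show "AE y in \<beta>. (indicator T y :: ennreal) \<le> indicator T (norm x *\<^sub>R sgn y)"
            using AEb
          proof eventually_elim
            case (elim y)
            have lt: "norm x < norm y" using elim \<open>x \<in> B\<close> unfolding B_def C_def by simp
            then have y0: "y \<noteq> 0" by auto
            have eq: "norm x *\<^sub>R sgn y = (norm x / norm y) *\<^sub>R y" using y0 by (simp add: sgn_div_norm divide_inverse)
            have "y \<in> T \<Longrightarrow> norm x *\<^sub>R sgn y \<in> T"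
              unfolding eq by (rule T_star) (use lt y0 in auto)
            then show ?case by (auto simp: indicator_def)
          qed
        qed
        finally show ?case .
      qed
    qed
    also have "\<dots> = (\<integral>\<^sup>+x. \<integral>\<^sup>+u. indicator T (norm x *\<^sub>R u) \<partial>\<nu> \<partial>\<alpha>)"
    proof (rule nn_integral_cong)
      fix x :: "real^'n"
      have "(\<lambda>u. indicator T (norm x *\<^sub>R u) :: ennreal) \<in> borel_measurable borel"
        using T_meas by measurable
      then show "(\<integral>\<^sup>+y. indicator T (norm x *\<^sub>R sgn y) \<partial>\<beta>) = (\<integral>\<^sup>+u. indicator T (norm x *\<^sub>R u) \<partial>\<nu>)"
        unfolding \<nu>_def using sgnb by (simp add: nn_integral_distr)
    qed
    also have "\<dots> = (\<integral>\<^sup>+t. \<integral>\<^sup>+u. indicator T (t *\<^sub>R u) \<partial>\<nu> \<partial>\<rho>)"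
    proof -
      have "(\<lambda>t. \<integral>\<^sup>+u. indicator T (t *\<^sub>R u) \<partial>\<nu>) \<in> borel_measurable borel"
        using N.borel_measurable_nn_integral[OF mIc] .
      then show ?thesis unfolding \<rho>_def using norma by (simp add: nn_integral_distr)
    qed
    also have "\<dots> = integral\<^sup>N (\<rho> \<Otimes>\<^sub>M \<nu>) (\<lambda>z. indicator T (fst z *\<^sub>R snd z))"
      using N.nn_integral_fst[OF mIp] by simp
    also have "\<dots> = integral\<^sup>N P (\<lambda>z. indicator T (fst z *\<^sub>R snd z))" unfolding pair ..
    also have "\<dots> = (\<integral>\<^sup>+x. indicator T (norm x *\<^sub>R sgn x) \<partial>density \<alpha> (\<lambda>_. c))"
    proof -
      have pa': "(\<lambda>x. (norm x, sgn x)) \<in> measurable (density \<alpha> (\<lambda>_. c)) (borel :: (real \<times> (real^'n)) measure)"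
        using pa by simp
      have "(\<lambda>z::real \<times> (real^'n). indicator T (fst z *\<^sub>R snd z) :: ennreal) \<in> borel_measurable borel"
        using mI by (simp add: borel_prod)
      then show ?thesis unfolding P_def using pa' by (simp add: nn_integral_distr)
    qed
    also have "\<dots> = (\<integral>\<^sup>+x. c * indicator T x \<partial>\<alpha>)"
    proof -
      have "(\<lambda>x. indicator T (norm x *\<^sub>R sgn x) :: ennreal) \<in> borel_measurable \<alpha>"
        unfolding msa using T_meas by measurable
      then show ?thesis by (simp add: nn_integral_density norm_scale_sgn)
    qed
    also have "\<dots> = c * emeasure \<alpha> T" using Ta by (rule nn_integral_cmult_indicator)
    finally show ?thesis unfolding c_def by (simp add: mult.commute)
  qed
  have k1: "measure M B * measure M (C \<inter> T) \<le> measure M C * measure M (B \<inter> T)"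
  proof -
    have U: "UNIV \<in> sets (borel :: (real^'n) measure)" by simp
    have "ennreal (measure M B * measure M (C \<inter> T)) \<le> ennreal (measure M C * measure M (B \<inter> T))"
      using key T_meas unfolding ea[OF U] eb[OF U] ea[OF T_meas] eb[OF T_meas]
      by (simp add: Mf.emeasure_eq_measure ennreal_mult[symmetric])
    then show ?thesis by (rule ennreal_le_iff[THEN iffD1, rotated]) simp
  qed
  have u1: "measure M UNIV = measure M B + measure M C"
    using Mf.finite_measure_Union[OF Bs BC(1)] BC(2) by simp
  have u2: "measure M T = measure M (B \<inter> T) + measure M (C \<inter> T)"
  proof -
    have "T = (B \<inter> T) \<union> (C \<inter> T)" using BC by blast
    moreover have "(B \<inter> T) \<inter> (C \<inter> T) = {}" using BC by blast
    ultimately show ?thesis using Mf.finite_measure_Union[of "B \<inter> T" "C \<inter> T"] Bs Ts by auto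
  qed
  show ?thesis unfolding Bc u1 u2 using k1 by (simp add: algebra_simps)
qed

end
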